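(* Let $\mathbb{S}^1$ be a circle of perimeter $1$, let $P\subset\mathbb{S}^1$ be a finite point set containing a source $s$ with $|P|>2$, and let $\rho_{\mathrm{opt}}$ be an optimal range assignment for $P$ (for a fixed $\alpha>1$). Then $\rho_{\mathrm{opt}}(p)<\frac12$ for all $p\in P$.
   Context: Distance on $\mathbb{S}^1$ is arc length along the circle: $d(p,q)=\min(d_{\mathrm{cw}}(p,q),d_{\mathrm{ccw}}(p,q))$. A range assignment $\rho$ on $P$ induces a directed graph with edge $(p,q)$ iff $d(p,q)\le\rho(p)$; it is feasible if the graph contains an arborescence rooted at $s$ spanning $P$; its cost is $\sum_{p\in P}\rho(p)^\alpha$ with $\alpha>1$; an optimal assignment is a feasible one of minimum cost. *)

theory Defs
  imports Complex_Main
begin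

text \<open>The circle S^1 of perimeter 1 is modelled as the interval [0,1) (reals mod 1).
  Clockwise/counterclockwise arc lengths and the arc-length distance.\<close>

definition d_ccw :: "real \<Rightarrow> real \<Rightarrow> real" where
  "d_ccw p q = frac (q - p)"

definition d_cw :: "real \<Rightarrow> real \<Rightarrow> real" where
  "d_cw p q = frac (p - q)"

definition circ_dist :: "real \<Rightarrow> real \<Rightarrow> real" where
  "circ_dist p q = min (d_cw p q) (d_ccw p q)"

definition induced_edges :: "real set \<Rightarrow> (real \<Rightarrow> real) \<Rightarrow> (real \<times> real) set" where
  "induced_edges P rho = {(p, q). p \<in> P \<and> q \<in> P \<and> p \<noteq> q \<and> circ_dist p q \<le> rho p}"

definition spanning_arborescence :: "real set \<Rightarrow> real \<Rightarrow> (real \<times> real) set \<Rightarrow> bool" where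
  "spanning_arborescence P s T \<longleftrightarrow>
     s \<in> P \<and> T \<subseteq> P \<times> P \<and>
     (\<forall>q \<in> P - {s}. \<exists>!p. (p, q) \<in> T) \<and>
     (\<forall>p. (p, s) \<notin> T) \<and>
     (\<forall>q \<in> P. (s, q) \<in> T\<^sup>*)"

definition range_assignment :: "real set \<Rightarrow> (real \<Rightarrow> real) \<Rightarrow> bool" where
  "range_assignment P rho \<longleftrightarrow> (\<forall>p \<in> P. rho p \<ge> 0)"

definition feasible :: "real set \<Rightarrow> real \<Rightarrow> (real \<Rightarrow> real) \<Rightarrow> bool" where
  "feasible P s rho \<longleftrightarrow> range_assignment P rho \<and>
     (\<exists>T \<subseteq> induced_edges P rho. spanning_arborescence P s T)"

definition cost :: "real \<Rightarrow> real set \<Rightarrow> (real \<Rightarrow> real) \<Rightarrow> real" where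
  "cost \<alpha> P rho = (\<Sum>p \<in> P. rho p powr \<alpha>)"

definition optimal :: "real \<Rightarrow> real set \<Rightarrow> real \<Rightarrow> (real \<Rightarrow> real) \<Rightarrow> bool" where
  "optimal \<alpha> P s rho \<longleftrightarrow> feasible P s rho \<and>
     (\<forall>rho'. feasible P s rho' \<longrightarrow> cost \<alpha> P rho \<le> cost \<alpha> P rho')"

end

theory Submission imports Defs begin

lemma frac_small: "-1 < u \<Longrightarrow> u < 1 \<Longrightarrow> frac u = (if u \<ge> 0 then u else u + 1)"
proof (cases "u \<ge> 0")
  case True
  assume "u < 1" thus ?thesis using True by (simp add: frac_eq)
next
  case False
  assume "-1 < u"
  have "floor u = -1" using False \<open>-1<u\<close> by (simp add: floor_eq_iff)
  thus ?thesis using False by (simp add: frac_def)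
qed

lemma cd_formula:
  assumes "p \<in> {0..<1}" "q \<in> {0..<1}"
  shows "circ_dist p q = min \<bar>q - p\<bar> (1 - \<bar>q - p\<bar>)"
  using assms frac_small[of "q-p"] frac_small[of "p-q"]
  unfolding circ_dist_def d_cw_def d_ccw_def by (auto simp: min_def abs_if)

lemma superadd:
  fixes m \<alpha> :: real
  assumes "0 < m" "m < 1/2" "\<alpha> > 1"
  shows "m powr \<alpha> + (1/2 - m) powr \<alpha> < (1/2) powr \<alpha>"
proof -
  have e: "x powr \<alpha> = x * x powr (\<alpha> - 1)" if "x > 0" for x :: real
  proof -
    have "x powr \<alpha> = x powr (1 + (\<alpha> - 1))" by simp
    also have "\<dots> = x powr 1 * x powr (\<alpha> - 1)" by (rule powr_add)
    also have "\<dots> = x * x powr (\<alpha> - 1)" using that by simp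
    finally show ?thesis .
  qed
  have a: "m powr (\<alpha>-1) < (1/2) powr (\<alpha>-1)" using assms by (intro powr_less_mono2) auto
  have b: "(1/2-m) powr (\<alpha>-1) < (1/2) powr (\<alpha>-1)" using assms by (intro powr_less_mono2) auto
  have "m powr \<alpha> + (1/2 - m) powr \<alpha> = m * m powr (\<alpha>-1) + (1/2-m) * (1/2-m) powr (\<alpha>-1)"
    using assms by (simp add: e)
  also have "\<dots> < m * (1/2) powr (\<alpha>-1) + (1/2-m) * (1/2) powr (\<alpha>-1)"
    using a b assms by (intro add_strict_mono mult_strict_left_mono) auto
  also have "\<dots> = (1/2) powr \<alpha>" using e[of "1/2"] by (simp add: algebra_simps)
  finally show ?thesis .
qed

lemma arb:
  assumes "E \<subseteq> P \<times> P" "s \<in> P" "\<forall>x\<in>P. (s,x) \<in> E\<^sup>*"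
  shows "\<exists>T\<subseteq>E. spanning_arborescence P s T"
proof -
  define dist where "dist x = (LEAST n. (s,x) \<in> E^^n)" for x
  have dex: "(s,x) \<in> E^^(dist x)" if "x \<in> P" for x
  proof -
    have "(s,x) \<in> E\<^sup>*" using assms(3) that by blast
    then obtain n where "(s,x) \<in> E^^n" by (blast dest: rtrancl_imp_relpow)
    thus ?thesis unfolding dist_def by (rule LeastI)
  qed
  have pex: "\<exists>y. (y,x) \<in> E \<and> dist y < dist x" if xP: "x \<in> P" and xs: "x \<noteq> s" for x
  proof -
    obtain n where n: "dist x = Suc n" using dex[OF xP] xs by (cases "dist x") auto
    have "(s,x) \<in> E^^n O E" using dex[OF xP] n by simp
    then obtain y where ysy: "(s,y) \<in> E^^n" and "(y,x) \<in> E" by blast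
    have "dist y \<le> n" unfolding dist_def using ysy by (rule Least_le)
    thus ?thesis using n \<open>(y,x)\<in>E\<close> by auto
  qed
  define par where "par x = (SOME y. (y,x) \<in> E \<and> dist y < dist x)" for x
  have par: "(par x, x) \<in> E \<and> dist (par x) < dist x" if "x \<in> P" "x \<noteq> s" for x
    unfolding par_def using someI_ex[OF pex[OF that]] .
  define T where "T = {(par x, x) | x. x \<in> P \<and> x \<noteq> s}"
  have TE: "T \<subseteq> E" using par unfolding T_def by auto
  have reach: "(s,x) \<in> T\<^sup>*" if "x \<in> P" for x
    using that
  proof (induction "dist x" arbitrary: x rule: less_induct)
    case less
    show ?case
    proof (cases "x = s")
      case True thus ?thesis by simp
    next
      case False
      have "par x \<in> P" using par[OF less.prems False] assms(1) by auto
      hence "(s, par x) \<in> T\<^sup>*" using less.hyps par[OF less.prems False] by blast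
      moreover have "(par x, x) \<in> T" unfolding T_def using less.prems False by auto
      ultimately show ?thesis by (rule rtrancl_into_rtrancl)
    qed
  qed
  have memT: "(a,b) \<in> T \<longleftrightarrow> b \<in> P \<and> b \<noteq> s \<and> a = par b" for a b
    unfolding T_def by blast
  have u: "\<forall>q \<in> P - {s}. \<exists>!p. (p, q) \<in> T" using memT by simp
  have n: "\<forall>p. (p, s) \<notin> T" using memT by simp
  have "T \<subseteq> P \<times> P" using TE assms(1) by blast
  hence "spanning_arborescence P s T"
    unfolding spanning_arborescence_def
    using assms(2) u n reach by blast
  thus ?thesis using TE by blast
qed

lemma transfer_feasible:
  assumes "feasible P s rho" "range_assignment P rho'"
    "induced_edges P rho \<subseteq> (induced_edges P rho')\<^sup>*"
  shows "feasible P s rho'"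
proof -
  obtain T where T: "T \<subseteq> induced_edges P rho" "spanning_arborescence P s T"
    using assms(1) unfolding feasible_def by auto
  have "T\<^sup>* \<subseteq> (induced_edges P rho')\<^sup>*"
  proof (rule rtrancl_subset_rtrancl)
    show "T \<subseteq> (induced_edges P rho')\<^sup>*" using T(1) assms(3) by (rule order_trans)
  qed
  hence "\<forall>x\<in>P. (s,x) \<in> (induced_edges P rho')\<^sup>*"
    using T(2) unfolding spanning_arborescence_def by auto
  moreover have "induced_edges P rho' \<subseteq> P \<times> P" unfolding induced_edges_def by auto
  ultimately obtain T' where "T' \<subseteq> induced_edges P rho'" "spanning_arborescence P s T'"
    using arb[of "induced_edges P rho'" P s] T(2) unfolding spanning_arborescence_def by blast
  thus ?thesis using assms(2) unfolding feasible_def by auto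
qed


lemma cd_bounds: "p \<in> {0..<1} \<Longrightarrow> q \<in> {0..<1} \<Longrightarrow> 0 \<le> circ_dist p q \<and> circ_dist p q \<le> 1/2"
  by (simp add: cd_formula min_def abs_if)

lemma cd_pos: "p \<in> {0..<1} \<Longrightarrow> q \<in> {0..<1} \<Longrightarrow> p \<noteq> q \<Longrightarrow> 0 < circ_dist p q"
  by (simp add: cd_formula min_def abs_if)

lemma cd_antipode_unique: "p \<in> {0..<1} \<Longrightarrow> q \<in> {0..<1} \<Longrightarrow> x \<in> {0..<1} \<Longrightarrow>
   circ_dist p q = 1/2 \<Longrightarrow> circ_dist p x = 1/2 \<Longrightarrow> x = q"
  by (simp add: cd_formula min_def abs_if split: if_splits)

lemma cd_via_antipode: "p \<in> {0..<1} \<Longrightarrow> q \<in> {0..<1} \<Longrightarrow> r \<in> {0..<1} \<Longrightarrow>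
   circ_dist p q = 1/2 \<Longrightarrow> circ_dist r q \<le> 1/2 - circ_dist p r"
  by (simp add: cd_formula min_def abs_if split: if_splits)

theorem lemma13:
  fixes P :: "real set" and s \<alpha> :: real and rho :: "real \<Rightarrow> real"
  assumes "\<alpha> > 1"
    and "finite P" and "P \<subseteq> {0..<1}" and "s \<in> P" and "card P > 2"
    and "optimal \<alpha> P s rho"
  shows "\<forall>p \<in> P. rho p < 1/2"
proof (rule ccontr)
  assume "\<not> (\<forall>p \<in> P. rho p < 1/2)"
  then obtain p where pP: "p \<in> P" and rp: "rho p \<ge> 1/2" by force
  have feas: "feasible P s rho" and opt: "\<And>r'. feasible P s r' \<Longrightarrow> cost \<alpha> P rho \<le> cost \<alpha> P r'"
    using assms(6) unfolding optimal_def by auto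
  have nonneg: "\<And>x. x \<in> P \<Longrightarrow> rho x \<ge> 0" using feas unfolding feasible_def range_assignment_def by auto
  have inI: "\<And>x. x \<in> P \<Longrightarrow> x \<in> {0..<1}" using assms(3) by auto
  have rpa: "(1/2) powr \<alpha> \<le> rho p powr \<alpha>" using rp assms(1) by (intro powr_mono2) auto
  show False
  proof (cases "\<exists>q\<in>P. circ_dist p q = 1/2")
    case False
    define D where "D = insert 0 {circ_dist p x | x. x \<in> P \<and> x \<noteq> p}"
    have Dfin: "finite D" unfolding D_def using assms(2) by auto
    define m where "m = Max D"
    have mge: "circ_dist p x \<le> m" if "x \<in> P" "x \<noteq> p" for x
      unfolding m_def using Dfin that by (intro Max_ge) (auto simp: D_def)
    have m0: "m \<ge> 0" unfolding m_def using Dfin by (intro Max_ge) (auto simp: D_def)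
    have "m \<in> D" unfolding m_def using Dfin by (intro Max_in) (auto simp: D_def)
    hence mlt: "m < 1/2" unfolding D_def using False cd_bounds[OF inI[OF pP] inI] by force
    define rho' where "rho' = rho(p := m)"
    have ra: "range_assignment P rho'" unfolding range_assignment_def rho'_def using nonneg m0 by auto
    have "induced_edges P rho \<subseteq> induced_edges P rho'"
      unfolding induced_edges_def rho'_def using mge by auto
    hence "feasible P s rho'" using transfer_feasible[OF feas ra] by auto
    hence le: "cost \<alpha> P rho \<le> cost \<alpha> P rho'" by (rule opt)
    have "cost \<alpha> P rho' < cost \<alpha> P rho"
      unfolding cost_def
    proof (rule sum_strict_mono_ex1[OF assms(2)])
      have mlt2: "m powr \<alpha> < rho p powr \<alpha>" using m0 mlt rp assms(1) by (intro powr_less_mono2) auto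
      thus "\<forall>x\<in>P. rho' x powr \<alpha> \<le> rho x powr \<alpha>" unfolding rho'_def by simp
      show "\<exists>x\<in>P. rho' x powr \<alpha> < rho x powr \<alpha>" using pP mlt2 unfolding rho'_def by auto
    qed
    thus False using le by simp
  next
    case True
    then obtain q where qP: "q \<in> P" and pq: "circ_dist p q = 1/2" by blast
    have "circ_dist p p = 0" using cd_formula[OF inI[OF pP] inI[OF pP]] by simp
    hence "q \<noteq> p" using pq by auto
    have "\<not> P \<subseteq> {p, q}"
    proof
      assume "P \<subseteq> {p,q}"
      hence "card P \<le> card {p,q}" by (intro card_mono) auto
      also have "\<dots> \<le> 2" by (simp add: card_insert_if)
      finally show False using assms(5) by simp
    qed
    then obtain r0 where r0: "r0 \<in> P" "r0 \<noteq> p" "r0 \<noteq> q" by blast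
    define D where "D = {circ_dist p x | x. x \<in> P \<and> x \<noteq> p \<and> x \<noteq> q}"
    have Dfin: "finite D" unfolding D_def using assms(2) by auto
    have Dne: "D \<noteq> {}" unfolding D_def using r0 by auto
    define m where "m = Max D"
    have mge: "circ_dist p x \<le> m" if "x \<in> P" "x \<noteq> p" "x \<noteq> q" for x
      unfolding m_def using Dfin that by (intro Max_ge) (auto simp: D_def)
    have "m \<in> D" unfolding m_def using Dfin Dne by (intro Max_in) auto
    then obtain r where rP: "r \<in> P" and rp': "r \<noteq> p" and rq: "r \<noteq> q" and mr: "m = circ_dist p r"
      unfolding D_def by auto
    have m0: "m > 0" using cd_pos[OF inI[OF pP] inI[OF rP]] rp' mr by auto
    have "m \<noteq> 1/2" using cd_antipode_unique[OF inI[OF pP] inI[OF qP] inI[OF rP] pq] rq mr by auto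
    hence mlt: "m < 1/2" using cd_bounds[OF inI[OF pP] inI[OF rP]] mr by auto
    have drq: "circ_dist r q \<le> 1/2 - m"
      using cd_via_antipode[OF inI[OF pP] inI[OF qP] inI[OF rP] pq] mr by simp
    define rho' where "rho' = rho(p := m, r := max (rho r) (1/2 - m))"
    have ra: "range_assignment P rho'" unfolding range_assignment_def rho'_def using nonneg m0 rP
      by (auto simp: le_max_iff_disj)
    have "induced_edges P rho \<subseteq> (induced_edges P rho')\<^sup>*"
    proof
      fix e assume e: "e \<in> induced_edges P rho"
      then obtain a b where eab: "e = (a,b)" and aP: "a \<in> P" and bP: "b \<in> P" and ab: "a \<noteq> b"
        and dab: "circ_dist a b \<le> rho a" unfolding induced_edges_def by auto
      show "e \<in> (induced_edges P rho')\<^sup>*"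
      proof (cases "a = p \<and> b = q")
        case True
        have "(p, r) \<in> induced_edges P rho'"
          unfolding induced_edges_def rho'_def using pP rP rp' mr by auto
        moreover have "(r, q) \<in> induced_edges P rho'"
          unfolding induced_edges_def rho'_def using qP rP rq drq by auto
        ultimately show ?thesis using True eab by auto
      next
        case False
        have "circ_dist a b \<le> rho' a"
        proof (cases "a = p")
          case True
          thus ?thesis unfolding rho'_def using mge[OF bP] ab False rp' by auto
        next
          case False
          thus ?thesis unfolding rho'_def using dab by auto
        qed
        hence "e \<in> induced_edges P rho'" unfolding induced_edges_def using eab aP bP ab by auto
        thus ?thesis by auto
      qed
    qed
    hence "feasible P s rho'" using transfer_feasible[OF feas ra] by auto
    hence le: "cost \<alpha> P rho \<le> cost \<alpha> P rho'" by (rule opt)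
    have split: "sum f P = f p + f r + sum f (P - {p} - {r})" for f :: "real \<Rightarrow> real"
    proof -
      have "sum f P = f p + sum f (P - {p})" using assms(2) pP by (rule sum.remove)
      also have "sum f (P - {p}) = f r + sum f (P - {p} - {r})"
        using assms(2) rP rp' by (intro sum.remove) auto
      finally show ?thesis by simp
    qed
    have rest: "sum (\<lambda>x. rho' x powr \<alpha>) (P - {p} - {r}) = sum (\<lambda>x. rho x powr \<alpha>) (P - {p} - {r})"
      unfolding rho'_def by (intro sum.cong) auto
    have mx: "max (rho r) (1/2 - m) powr \<alpha> \<le> rho r powr \<alpha> + (1/2 - m) powr \<alpha>"
      by (simp add: max_def)
    have key: "m powr \<alpha> + (1/2 - m) powr \<alpha> < (1/2) powr \<alpha>" using superadd m0 mlt assms(1) by blast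
    have e1: "rho' p = m" "rho' r = max (rho r) (1/2 - m)" unfolding rho'_def using rp' by auto
    have c1: "cost \<alpha> P rho' = m powr \<alpha> + max (rho r) (1/2 - m) powr \<alpha> + sum (\<lambda>x. rho x powr \<alpha>) (P - {p} - {r})"
      unfolding cost_def using split[of "\<lambda>x. rho' x powr \<alpha>"] rest e1 by simp
    have c2: "cost \<alpha> P rho = rho p powr \<alpha> + rho r powr \<alpha> + sum (\<lambda>x. rho x powr \<alpha>) (P - {p} - {r})"
      unfolding cost_def by (rule split)
    have "cost \<alpha> P rho' < cost \<alpha> P rho"
      unfolding c1 c2 using mx key rpa by linarith
    thus False using le by simp
  qed
qed

end
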